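(* Let $m \le n$, let $1 \le h \le k \le m$, and let $X$ be any linear operator on $\mathcal{H}_n \otimes \mathcal{H}_m$. Then \[ \|X\|_{S(h)} \le \|X\|_{S(k)} \le \frac{k}{h}\|X\|_{S(h)}. \]
   Context: $\mathcal{H}_d = \mathbb{C}^d$ and $m\le n$. $SR$ denotes Schmidt rank, i.e. the number of nonzero singular values of the coefficient matrix of a vector in $\mathcal{H}_n\otimes\mathcal{H}_m$. For $1\le k\le m$, \[ \|X\|_{S(k)} := \sup\{|\langle w|X|v\rangle| : |v\rangle,|w\rangle \text{ unit vectors}, SR(|v\rangle),SR(|w\rangle)\le k\}. \] *)

theory Defs
  imports "HOL-Analysis.Analysis"
begin

text \<open>A vector in H_n \<otimes> H_m is a vector of complex coefficients indexed by
  pairs (i,j) with i in 'n (|'n| = n) and j in 'm (|'m| = m).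
  Its coefficient matrix is the n x m matrix (v (i,j)).\<close>

definition coeff_matrix :: "complex ^ ('n::finite \<times> 'm::finite) \<Rightarrow> complex ^ 'm ^ 'n" where
  "coeff_matrix v = (\<chi> i j. v $ (i, j))"

text \<open>Schmidt rank: number of nonzero singular values of the coefficient matrix,
  i.e. the rank of the coefficient matrix.\<close>
definition schmidt_rank :: "complex ^ ('n::finite \<times> 'm::finite) \<Rightarrow> nat" where
  "schmidt_rank v = rank (coeff_matrix v)"

definition braket :: "complex ^ 'a::finite \<Rightarrow> complex ^ 'a ^ 'a \<Rightarrow> complex ^ 'a \<Rightarrow> complex" where
  "braket w X v = (\<Sum>i\<in>UNIV. cnj (w $ i) * (X *v v) $ i)"

definition SK_norm :: "nat \<Rightarrow> complex ^ ('n::finite \<times> 'm::finite) ^ ('n \<times> 'm) \<Rightarrow> real" where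
  "SK_norm k X = Sup {cmod (braket w X v) | v w.
      norm v = 1 \<and> norm w = 1 \<and> schmidt_rank v \<le> k \<and> schmidt_rank w \<le> k}"

end

theory Submission
  imports Defs
begin

definition ip :: "complex^'a::finite \<Rightarrow> complex^'a \<Rightarrow> complex" where
  "ip x y = (\<Sum>i\<in>UNIV. cnj (x$i) * y$i)"

lemma ip_add_right: "ip x (y + z) = ip x y + ip x z"
  by (simp add: ip_def distrib_left sum.distrib)
lemma ip_scale_right: "ip x (c *s y) = c * ip x y"
  by (simp add: ip_def sum_distrib_left mult.assoc mult.left_commute)
lemma ip_scale_left: "ip (c *s x) y = cnj c * ip x y"
  by (simp add: ip_def sum_distrib_left mult.assoc)
lemma ip_diff_right: "ip x (y - z) = ip x y - ip x z"
  by (simp add: ip_def right_diff_distrib sum_subtractf)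
lemma ip_zero_left[simp]: "ip 0 y = 0" by (simp add: ip_def)
lemma ip_zero_right[simp]: "ip x 0 = 0" by (simp add: ip_def)
lemma ip_add_left: "ip (x + y) z = ip x z + ip y z"
  by (simp add: ip_def distrib_right sum.distrib)
lemma ip_sum_right: "ip x (sum f I) = (\<Sum>i\<in>I. ip x (f i))"
  by (induction I rule: infinite_finite_induct) (simp_all add: ip_add_right)
lemma ip_sum_left: "ip (sum f I) y = (\<Sum>i\<in>I. ip (f i) y)"
  by (induction I rule: infinite_finite_induct) (simp_all add: ip_add_left)
lemma ip_swap: "ip y x = cnj (ip x y)"
  by (simp add: ip_def mult.commute)

lemma norm_sq_sum: "(norm (x::complex^'a::finite))^2 = (\<Sum>i\<in>UNIV. (cmod (x$i))^2)"
  by (simp add: norm_vec_def L2_set_def sum_nonneg)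

lemma ip_self: "ip x x = of_real ((norm x)^2)"
proof -
  have "ip x x = (\<Sum>i\<in>UNIV. complex_of_real ((cmod (x$i))^2))"
    unfolding ip_def by (rule sum.cong) (auto simp: mult.commute, metis complex_norm_square of_real_power)
  also have "\<dots> = of_real ((norm x)^2)" by (simp add: norm_sq_sum)
  finally show ?thesis .
qed

lemma norm_smult: "norm (c *s (x::complex^'a::finite)) = cmod c * norm x"
  by (simp add: norm_vec_def L2_set_right_distrib norm_mult)

definition orthonormal :: "(complex^'a::finite) set \<Rightarrow> bool" where
  "orthonormal S \<longleftrightarrow> (\<forall>a\<in>S. \<forall>b\<in>S. ip a b = (if a = b then 1 else 0))"

lemma expansion:
  assumes "finite S" "orthonormal S" "x \<in> vec.span S"
  shows "x = (\<Sum>b\<in>S. ip b x *s b)"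
proof -
  obtain u where u: "x = (\<Sum>v\<in>S. u v *s v)"
    using assms(3) vec.span_finite[OF assms(1)] by auto
  have "ip b x = u b" if "b \<in> S" for b
  proof -
    have "ip b x = (\<Sum>v\<in>S. u v * ip b v)" by (simp add: u ip_sum_right ip_scale_right)
    also have "\<dots> = (\<Sum>v\<in>S. if v = b then u v else 0)"
      using assms(2) that unfolding orthonormal_def by (intro sum.cong) auto
    also have "\<dots> = u b" using assms(1) that by simp
    finally show ?thesis .
  qed
  then show ?thesis using u by (metis (no_types, lifting) sum.cong)
qed

lemma gs:
  fixes C :: "(complex^'a::finite) set"
  assumes "finite C"
  shows "\<exists>S. finite S \<and> card S \<le> card C \<and> C \<subseteq> vec.span S \<and> orthonormal S"
  using assms
proof (induction C rule: finite_induct)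
  case empty
  then show ?case by (intro exI[of _ "{}"]) (auto simp: orthonormal_def)
next
  case (insert x C)
  then obtain S where S: "finite S" "card S \<le> card C" "C \<subseteq> vec.span S" "orthonormal S" by auto
  define y where "y = x - (\<Sum>b\<in>S. ip b x *s b)"
  have yorth: "ip b y = 0" if "b \<in> S" for b
  proof -
    have "ip b (\<Sum>a\<in>S. ip a x *s a) = (\<Sum>a\<in>S. if a = b then ip b x else 0)"
      using S(4) that unfolding ip_sum_right ip_scale_right orthonormal_def
      by (intro sum.cong) auto
    also have "\<dots> = ip b x" using S(1) that by simp
    finally show ?thesis by (simp add: y_def ip_diff_right)
  qed
  have xeq: "x = y + (\<Sum>b\<in>S. ip b x *s b)" by (simp add: y_def)
  show ?case
  proof (cases "y = 0")
    case True
    have "(\<Sum>b\<in>S. ip b x *s b) \<in> vec.span S"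
      by (intro vec.span_sum vec.span_scale vec.span_base)
    then have "x \<in> vec.span S" using xeq True by simp
    then show ?thesis using S insert by (intro exI[of _ S]) auto
  next
    case False
    define e where "e = complex_of_real (1 / norm y) *s y"
    have ny: "norm y > 0" using False by simp
    have "norm e = cmod (complex_of_real (1 / norm y)) * norm y" unfolding e_def by (rule norm_smult)
    also have "\<dots> = 1" using ny by (simp only: norm_of_real) simp
    finally have ee: "ip e e = 1" by (simp add: ip_self)
    have eb: "ip e b = 0" "ip b e = 0" if "b \<in> S" for b
      using yorth[OF that] by (auto simp: e_def ip_scale_left ip_scale_right ip_swap[of y b])
    have eS: "e \<notin> S" using eb ee by force
    have "y = complex_of_real (norm y) *s e" using ny by (simp add: e_def vector_smult_assoc)
    then have "y \<in> vec.span (insert e S)" by (metis vec.span_base vec.span_scale insertI1)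
    moreover have "(\<Sum>b\<in>S. ip b x *s b) \<in> vec.span (insert e S)"
      by (intro vec.span_sum vec.span_scale vec.span_base) auto
    ultimately have "x \<in> vec.span (insert e S)" using xeq vec.span_add by metis
    moreover have "C \<subseteq> vec.span (insert e S)" using S(3) vec.span_mono[of S "insert e S"] by auto
    moreover have "orthonormal (insert e S)"
      using S(4) ee eb unfolding orthonormal_def by auto
    ultimately show ?thesis using S insert eS
      by (intro exI[of _ "insert e S"]) auto
  qed
qed

definition tensor :: "complex^'n::finite \<Rightarrow> complex^'m::finite \<Rightarrow> complex^('n \<times> 'm)" where
  "tensor x y = (\<chi> pq. x $ fst pq * y $ snd pq)"

lemma ip_tensor: "ip (tensor x y) (tensor x' y') = ip x x' * ip y y'"
proof -
  have "ip (tensor x y) (tensor x' y') =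
        (\<Sum>(p,q)\<in>UNIV \<times> UNIV. (cnj (x $ p) * x' $ p) * (cnj (y $ q) * y' $ q))"
    by (simp add: ip_def tensor_def UNIV_Times_UNIV case_prod_beta mult_ac)
  also have "\<dots> = (\<Sum>p\<in>UNIV. \<Sum>q\<in>UNIV. (cnj (x $ p) * x' $ p) * (cnj (y $ q) * y' $ q))"
    by (rule sum.cartesian_product[symmetric])
  also have "\<dots> = ip x x' * ip y y'"
    by (simp add: ip_def sum_product)
  finally show ?thesis .
qed

lemma rank_le_dim:
  fixes z :: "complex^('n::finite \<times> 'm::finite)"
  assumes "rows (coeff_matrix z) \<subseteq> vec.span W"
  shows "schmidt_rank z \<le> vec.dim W"
proof -
  have "vec.dim (rows (coeff_matrix z)) \<le> vec.dim (vec.span W)"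
    using assms by (rule vec.dim_subset)
  then show ?thesis by (simp add: schmidt_rank_def row_rank_def_gen)
qed

lemma rank_le_card:
  fixes z :: "complex^('n::finite \<times> 'm::finite)"
  assumes "rows (coeff_matrix z) \<subseteq> vec.span W" "finite W"
  shows "schmidt_rank z \<le> card W"
  using rank_le_dim[OF assms(1)] vec.dim_le_card[OF vec.span_superset assms(2)] by linarith

lemma decomp:
  fixes v :: "complex^('n::finite \<times> 'm::finite)"
  assumes "schmidt_rank v \<le> k"
  shows "\<exists>u. v = (\<Sum>i<k. u i) \<and> (\<forall>i<k. \<forall>j<k. i \<noteq> j \<longrightarrow> ip (u i) (u j) = 0)
           \<and> (\<forall>I \<subseteq> {..<k}. schmidt_rank (\<Sum>i\<in>I. u i) \<le> card I)"
proof -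
  define M where "M = coeff_matrix v"
  define R where "R = rows M"
  obtain B where B: "B \<subseteq> R" "vec.independent B" "R \<subseteq> vec.span B" "card B = vec.dim R"
    using vec.basis_exists by blast
  have fB: "finite B" using B(2) vec.finiteI_independent by blast
  obtain S where S: "finite S" "card S \<le> card B" "B \<subseteq> vec.span S" "orthonormal S"
    using gs[OF fB] by blast
  have RS: "R \<subseteq> vec.span S"
    using B(3) vec.span_minimal[OF S(3) vec.subspace_span] by blast
  have cS: "card S \<le> k" using S(2) B(4) assms by (simp add: schmidt_rank_def row_rank_def_gen R_def M_def)
  obtain f where f: "bij_betw f {..<card S} S"
    using ex_bij_betw_nat_finite[OF S(1)] by (auto simp: lessThan_atLeast0)
  define b where "b i = (if i < card S then f i else 0)" for i
  define \<alpha> where "\<alpha> i = (\<chi> p. ip (b i) (M $ p))" for i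
  define u where "u i = tensor (\<alpha> i) (b i)" for i
  have borth: "ip (b i) (b j) = 0" if "i \<noteq> j" for i j
  proof (cases "i < card S \<and> j < card S")
    case True
    then have "f i \<noteq> f j" "f i \<in> S" "f j \<in> S"
      using f that unfolding bij_betw_def inj_on_def by auto
    then show ?thesis using S(4) True unfolding orthonormal_def b_def by auto
  next
    case False
    then show ?thesis unfolding b_def by auto
  qed
  have uorth: "\<forall>i<k. \<forall>j<k. i \<noteq> j \<longrightarrow> ip (u i) (u j) = 0"
    by (simp add: u_def ip_tensor borth)
  have Mrow: "M $ p \<in> vec.span S" for p
    using RS unfolding R_def rows_def row_def by auto
  have veq: "v = (\<Sum>i<k. u i)"
  proof (rule vec_eq_iff[THEN iffD2], intro allI)
    fix pq :: "'n \<times> 'm"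
    obtain p q where pq: "pq = (p, q)" by fastforce
    have "(\<Sum>i<k. u i) $ pq = (\<Sum>i<k. ip (b i) (M $ p) * b i $ q)"
      by (simp add: sum_component u_def tensor_def \<alpha>_def pq)
    also have "\<dots> = (\<Sum>i<card S. ip (b i) (M $ p) * b i $ q)"
      using cS by (intro sum.mono_neutral_right) (auto simp: b_def)
    also have "\<dots> = (\<Sum>i<card S. ip (f i) (M $ p) * f i $ q)"
      by (intro sum.cong) (auto simp: b_def)
    also have "\<dots> = (\<Sum>a\<in>S. ip a (M $ p) * a $ q)"
      using sum.reindex_bij_betw[OF f, of "\<lambda>a. ip a (M $ p) * a $ q"] by simp
    also have "\<dots> = (\<Sum>a\<in>S. ip a (M $ p) *s a) $ q"
      by (simp add: sum_component)
    also have "\<dots> = M $ p $ q"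
      using expansion[OF S(1) S(4) Mrow[of p]] by simp
    also have "\<dots> = v $ pq" by (simp add: M_def coeff_matrix_def pq)
    finally show "v $ pq = (\<Sum>i<k. u i) $ pq" by simp
  qed
  have rk: "schmidt_rank (\<Sum>i\<in>I. u i) \<le> card I" if I: "I \<subseteq> {..<k}" for I
  proof -
    have fI: "finite I" using I finite_subset by blast
    have "rows (coeff_matrix (\<Sum>i\<in>I. u i)) \<subseteq> vec.span (b ` I)"
    proof
      fix r assume "r \<in> rows (coeff_matrix (\<Sum>i\<in>I. u i))"
      then obtain p where r: "r = coeff_matrix (\<Sum>i\<in>I. u i) $ p"
        unfolding rows_def row_def by auto
      have "r = (\<Sum>i\<in>I. (\<alpha> i $ p) *s b i)"
        by (simp add: r coeff_matrix_def vec_eq_iff sum_component u_def tensor_def)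
      also have "\<dots> \<in> vec.span (b ` I)"
        by (intro vec.span_sum vec.span_scale vec.span_base) auto
      finally show "r \<in> vec.span (b ` I)" .
    qed
    then have "schmidt_rank (\<Sum>i\<in>I. u i) \<le> card (b ` I)"
      using fI by (intro rank_le_card) auto
    also have "\<dots> \<le> card I" using fI by (rule card_image_le)
    finally show ?thesis .
  qed
  show ?thesis using veq uorth rk by blast
qed

lemma cyc_inj:
  assumes "0 < (k::nat)"
  shows "inj_on (\<lambda>t. (j + t) mod k) {..<k}"
proof (rule inj_onI)
  fix a b assume a: "a \<in> {..<k}" and b: "b \<in> {..<k}" and e: "(j + a) mod k = (j + b) mod k"
  have "a mod k = b mod k" using e by (simp add: nat_mod_eq_iff)
  then show "a = b" using a b by simp
qed

lemma cyc_sum: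
  fixes g :: "nat \<Rightarrow> 'a::comm_semiring_1"
  assumes "0 < k" "h \<le> k"
  shows "(\<Sum>j<k. \<Sum>i\<in>(\<lambda>t. (j + t) mod k) ` {..<h}. g i) = of_nat h * (\<Sum>i<k. g i)"
proof -
  have inj: "inj_on (\<lambda>t. (j + t) mod k) {..<h}" for j
    using cyc_inj[OF assms(1), of j] assms(2) inj_on_subset by fastforce
  have "(\<Sum>j<k. \<Sum>i\<in>(\<lambda>t. (j + t) mod k) ` {..<h}. g i) = (\<Sum>j<k. \<Sum>t<h. g ((j + t) mod k))"
  proof (rule sum.cong[OF refl])
    fix j assume "j \<in> {..<k}"
    show "(\<Sum>i\<in>(\<lambda>t. (j + t) mod k) ` {..<h}. g i) = (\<Sum>t<h. g ((j + t) mod k))"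
      using sum.reindex[OF inj[of j], of g] by (simp add: comp_def)
  qed
  also have "\<dots> = (\<Sum>t<h. \<Sum>j<k. g ((j + t) mod k))" by (rule sum.swap)
  also have "\<dots> = (\<Sum>t<h. \<Sum>i<k. g i)"
  proof (rule sum.cong[OF refl])
    fix t assume "t \<in> {..<h}"
    have inj2: "inj_on (\<lambda>j. (j + t) mod k) {..<k}"
      using cyc_inj[OF assms(1), of t] by (simp add: add.commute)
    have im: "(\<lambda>j. (j + t) mod k) ` {..<k} = {..<k}"
      using assms(1) by (intro endo_inj_surj inj2) auto
    show "(\<Sum>j<k. g ((j + t) mod k)) = (\<Sum>i<k. g i)"
      using sum.reindex[OF inj2, of g] im by simp
  qed
  also have "\<dots> = of_nat h * (\<Sum>i<k. g i)" by simp
  finally show ?thesis .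
qed

lemma pyth:
  assumes "finite I" "\<forall>i\<in>I. \<forall>j\<in>I. i \<noteq> j \<longrightarrow> ip (u i) (u j) = 0"
  shows "(norm (\<Sum>i\<in>I. u i))^2 = (\<Sum>i\<in>I. (norm (u i))^2)"
proof -
  have "complex_of_real ((norm (\<Sum>i\<in>I. u i))^2) = ip (\<Sum>i\<in>I. u i) (\<Sum>i\<in>I. u i)"
    by (rule ip_self[symmetric])
  also have "\<dots> = (\<Sum>i\<in>I. \<Sum>j\<in>I. ip (u i) (u j))"
    by (simp only: ip_sum_left ip_sum_right, rule sum.swap)
  also have "\<dots> = (\<Sum>i\<in>I. \<Sum>j\<in>I. if j = i then ip (u i) (u i) else 0)"
    using assms(2) by (intro sum.cong refl) auto
  also have "\<dots> = (\<Sum>i\<in>I. ip (u i) (u i))" using assms(1) by simp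
  also have "\<dots> = complex_of_real (\<Sum>i\<in>I. (norm (u i))^2)" by (simp add: ip_self)
  finally show ?thesis using of_real_eq_iff by blast
qed

lemma braket_ip: "braket w X v = ip w (X *v v)"
  by (simp add: braket_def ip_def)

lemma mv_scale: "X *v (c *s v) = c *s (X *v (v::complex^'a::finite))"
  by (simp add: vec_eq_iff matrix_vector_mult_def sum_distrib_left mult_ac)

lemma mv_sum: "X *v (sum f I) = (\<Sum>i\<in>I. X *v f i)"
  by (induction I rule: infinite_finite_induct) (simp_all add: matrix_vector_right_distrib)

lemma braket_sum_right: "braket w X (sum f I) = (\<Sum>i\<in>I. braket w X (f i))"
  by (simp add: braket_ip mv_sum ip_sum_right)
lemma braket_sum_left: "braket (sum f I) X v = (\<Sum>i\<in>I. braket (f i) X v)"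
  by (simp add: braket_ip ip_sum_left)
lemma braket_scale: "braket (c *s w) X (d *s v) = cnj c * d * braket w X v"
  by (simp add: braket_ip mv_scale ip_scale_left ip_scale_right)
lemma braket_zero[simp]: "braket 0 X v = 0" "braket w X 0 = 0"
  by (simp_all add: braket_ip)

lemma braket_bound:
  fixes X :: "complex^'a::finite^'a"
  assumes "norm v \<le> 1" "norm w \<le> 1"
  shows "cmod (braket w X v) \<le> (\<Sum>i\<in>UNIV. \<Sum>j\<in>UNIV. cmod (X $ i $ j))"
proof -
  have "cmod (braket w X v) \<le> (\<Sum>i\<in>UNIV. cmod (cnj (w $ i) * (X *v v) $ i))"
    unfolding braket_def by (rule norm_sum)
  also have "\<dots> \<le> (\<Sum>i\<in>UNIV. \<Sum>j\<in>UNIV. cmod (X $ i $ j))"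
  proof (rule sum_mono)
    fix i
    have "cmod (cnj (w $ i) * (X *v v) $ i) = cmod (w $ i) * cmod ((X *v v) $ i)"
      by (simp add: norm_mult)
    also have "\<dots> \<le> 1 * cmod ((X *v v) $ i)"
      using Finite_Cartesian_Product.norm_nth_le[of w i] assms(2) by (intro mult_right_mono) auto
    also have "\<dots> \<le> (\<Sum>j\<in>UNIV. cmod (X $ i $ j * v $ j))"
      by (simp add: matrix_vector_mult_def norm_sum)
    also have "\<dots> \<le> (\<Sum>j\<in>UNIV. cmod (X $ i $ j))"
    proof (rule sum_mono)
      fix j
      have "cmod (v $ j) \<le> 1" using Finite_Cartesian_Product.norm_nth_le[of v j] assms(1) by linarith
      then show "cmod (X $ i $ j * v $ j) \<le> cmod (X $ i $ j)"
        by (simp add: norm_mult mult_left_le)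
    qed
    finally show "cmod (cnj (w $ i) * (X *v v) $ i) \<le> (\<Sum>j\<in>UNIV. cmod (X $ i $ j))" .
  qed
  finally show ?thesis .
qed

lemma rank_scale:
  fixes v :: "complex^('n::finite \<times> 'm::finite)"
  shows "schmidt_rank (c *s v) \<le> schmidt_rank v"
proof -
  have "rows (coeff_matrix (c *s v)) \<subseteq> vec.span (rows (coeff_matrix v))"
  proof
    fix r assume "r \<in> rows (coeff_matrix (c *s v))"
    then obtain p where r: "r = coeff_matrix (c *s v) $ p" unfolding rows_def row_def by auto
    have "r = c *s (coeff_matrix v $ p)" by (simp add: r coeff_matrix_def vec_eq_iff)
    also have "\<dots> \<in> vec.span (rows (coeff_matrix v))"
      by (intro vec.span_scale vec.span_base) (auto simp: rows_def row_def)
    finally show "r \<in> vec.span (rows (coeff_matrix v))" .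
  qed
  then show ?thesis using rank_le_dim by (fastforce simp: schmidt_rank_def row_rank_def_gen)
qed

lemma rank_axis:
  "schmidt_rank (axis (i0::'n::finite, j0::'m::finite) (1::complex)) \<le> 1"
proof -
  have "rows (coeff_matrix (axis (i0, j0) (1::complex))) \<subseteq> vec.span {axis j0 1}"
  proof
    fix r assume "r \<in> rows (coeff_matrix (axis (i0, j0) (1::complex)))"
    then obtain p where r: "r = coeff_matrix (axis (i0, j0) (1::complex)) $ p"
      unfolding rows_def row_def by auto
    have "r = (if p = i0 then 1 else 0) *s axis j0 1"
      by (simp add: r coeff_matrix_def vec_eq_iff axis_def)
    also have "\<dots> \<in> vec.span {axis j0 1}"
      by (intro vec.span_scale vec.span_base) auto
    finally show "r \<in> vec.span {axis j0 1}" .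
  qed
  then show ?thesis using rank_le_card[of _ "{axis j0 1}"] by fastforce
qed

lemma norm_axis_c: "norm (axis i (1::complex)) = 1"
proof -
  have "(norm (axis i (1::complex)))^2 = (\<Sum>j\<in>UNIV. if j = i then 1 else 0)"
    unfolding norm_sq_sum by (intro sum.cong) (auto simp: axis_def)
  also have "\<dots> = 1" by simp
  finally show ?thesis by (simp add: power2_eq_1_iff)
qed

definition Aset :: "nat \<Rightarrow> complex ^ ('n::finite \<times> 'm::finite) ^ ('n \<times> 'm) \<Rightarrow> real set" where
  "Aset k X = {cmod (braket w X v) | v w.
      norm v = 1 \<and> norm w = 1 \<and> schmidt_rank v \<le> k \<and> schmidt_rank w \<le> k}"

lemma SK_Aset: "SK_norm k X = Sup (Aset k X)"
  by (simp add: SK_norm_def Aset_def)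

lemma Aset_bdd: "bdd_above (Aset k X)"
  unfolding Aset_def bdd_above_def
  by (rule exI[of _ "\<Sum>i\<in>UNIV. \<Sum>j\<in>UNIV. cmod (X $ i $ j)"]) (auto intro!: braket_bound)

lemma Aset_ne:
  fixes X :: "complex ^ ('n::finite \<times> 'm::finite) ^ ('n \<times> 'm)"
  assumes "1 \<le> k" shows "Aset k X \<noteq> {}"
proof -
  define e :: "complex ^ ('n \<times> 'm)" where "e = axis (undefined, undefined) 1"
  have "norm e = 1" "schmidt_rank e \<le> k"
    using norm_axis_c rank_axis assms le_trans unfolding e_def by blast+
  then have "cmod (braket e X e) \<in> Aset k X"
    unfolding Aset_def by blast
  then show ?thesis by blast
qed

lemma Aset_mono: "h \<le> k \<Longrightarrow> Aset h X \<subseteq> Aset k X"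
  unfolding Aset_def by fastforce

lemma homog:
  fixes X :: "complex ^ ('n::finite \<times> 'm::finite) ^ ('n \<times> 'm)"
  assumes "schmidt_rank v \<le> h" "schmidt_rank w \<le> h"
  shows "cmod (braket w X v) \<le> SK_norm h X * norm w * norm v"
proof (cases "v = 0 \<or> w = 0")
  case True
  then show ?thesis by auto
next
  case False
  then have nv: "norm v > 0" and nw: "norm w > 0" by auto
  define v' where "v' = complex_of_real (1 / norm v) *s v"
  define w' where "w' = complex_of_real (1 / norm w) *s w"
  have n1: "norm (complex_of_real (1 / norm x) *s x) = 1" if "norm x > 0" for x :: "complex^('n \<times> 'm)"
  proof -
    have "norm (complex_of_real (1 / norm x) *s x) = cmod (complex_of_real (1 / norm x)) * norm x"
      by (rule norm_smult)
    also have "\<dots> = 1" using that by (simp only: norm_of_real) simp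
    finally show ?thesis .
  qed
  have "cmod (braket w' X v') \<in> Aset h X"
    unfolding Aset_def using n1[OF nv] n1[OF nw] rank_scale[of _ v] rank_scale[of _ w] assms
    unfolding v'_def w'_def by (smt (verit) mem_Collect_eq order_trans)
  then have le: "cmod (braket w' X v') \<le> SK_norm h X"
    unfolding SK_Aset using Aset_bdd by (rule cSup_upper)
  have "braket w' X v' = complex_of_real (1 / norm w) * complex_of_real (1 / norm v) * braket w X v"
    unfolding v'_def w'_def braket_scale by simp
  then have "cmod (braket w' X v') = cmod (braket w X v) / (norm w * norm v)"
    using nv nw by (simp add: norm_mult norm_divide)
  then show ?thesis using le nv nw by (simp add: divide_le_eq mult_ac)
qed

theorem theorem4p13:
  fixes X :: "complex ^ ('n::finite \<times> 'm::finite) ^ ('n \<times> 'm)"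
    and h k :: nat
  assumes "CARD('m) \<le> CARD('n)"
    and "1 \<le> h" and "h \<le> k" and "k \<le> CARD('m)"
  shows "SK_norm h X \<le> SK_norm k X \<and> SK_norm k X \<le> (real k / real h) * SK_norm h X"
proof
  show "SK_norm h X \<le> SK_norm k X"
    unfolding SK_Aset by (rule cSup_subset_mono[OF Aset_ne[OF assms(2)] Aset_bdd Aset_mono[OF assms(3)]])
next
  define N where "N = SK_norm h X"
  have hpos: "0 < h" and kpos: "0 < k" using assms by auto
  have N0: "0 \<le> N"
  proof -
    obtain a where a: "a \<in> Aset h X" using Aset_ne[OF assms(2)] by blast
    have "0 \<le> a" using a unfolding Aset_def by auto
    also have "a \<le> N" unfolding N_def SK_Aset using a Aset_bdd by (rule cSup_upper)
    finally show ?thesis .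
  qed
  define I where "I j = (\<lambda>t. (j + t) mod k) ` {..<h}" for j
  have Isub: "I j \<subseteq> {..<k}" for j using kpos by (auto simp: I_def)
  have Icard: "card (I j) \<le> h" for j
    unfolding I_def using card_image_le[of "{..<h}"] by fastforce
  have key: "cmod (braket w X v) \<le> (real k / real h) * N"
    if v: "norm v = 1" "schmidt_rank v \<le> k" and w: "norm w = 1" "schmidt_rank w \<le> k" for v w
  proof -
    obtain u where u: "v = (\<Sum>i<k. u i)" "\<forall>i<k. \<forall>j<k. i \<noteq> j \<longrightarrow> ip (u i) (u j) = 0"
      "\<forall>I \<subseteq> {..<k}. schmidt_rank (\<Sum>i\<in>I. u i) \<le> card I"
      using decomp[OF v(2)] by blast
    obtain y where y: "w = (\<Sum>i<k. y i)" "\<forall>i<k. \<forall>j<k. i \<noteq> j \<longrightarrow> ip (y i) (y j) = 0"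
      "\<forall>I \<subseteq> {..<k}. schmidt_rank (\<Sum>i\<in>I. y i) \<le> card I"
      using decomp[OF w(2)] by blast
    define V where "V j = (\<Sum>i\<in>I j. u i)" for j
    define W where "W j = (\<Sum>i\<in>I j. y i)" for j
    have rV: "schmidt_rank (V j) \<le> h" for j
      using u(3) Isub[of j] Icard[of j] unfolding V_def by (meson order_trans)
    have rW: "schmidt_rank (W j) \<le> h" for j
      using y(3) Isub[of j] Icard[of j] unfolding W_def by (meson order_trans)
    have sq: "(\<Sum>j<k. (norm (V j))^2) = real h" "(\<Sum>j<k. (norm (W j))^2) = real h"
    proof -
      have "(\<Sum>j<k. (norm (V j))^2) = (\<Sum>j<k. \<Sum>i\<in>I j. (norm (u i))^2)"
      proof (rule sum.cong[OF refl])
        fix j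
        have "\<forall>a\<in>I j. \<forall>b\<in>I j. a \<noteq> b \<longrightarrow> ip (u a) (u b) = 0"
          using Isub[of j] u(2) by (meson lessThan_iff subsetD)
        moreover have "finite (I j)" using Isub[of j] finite_subset by blast
        ultimately show "(norm (V j))^2 = (\<Sum>i\<in>I j. (norm (u i))^2)"
          unfolding V_def by (rule pyth[rotated])
      qed
      also have "\<dots> = real h * (\<Sum>i<k. (norm (u i))^2)"
        unfolding I_def using cyc_sum[OF kpos assms(3)] by blast
      also have "\<dots> = real h" using pyth[of "{..<k}" u] u(1,2) v(1) by simp
      finally show "(\<Sum>j<k. (norm (V j))^2) = real h" .
      have "(\<Sum>j<k. (norm (W j))^2) = (\<Sum>j<k. \<Sum>i\<in>I j. (norm (y i))^2)"
      proof (rule sum.cong[OF refl])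
        fix j
        have "\<forall>a\<in>I j. \<forall>b\<in>I j. a \<noteq> b \<longrightarrow> ip (y a) (y b) = 0"
          using Isub[of j] y(2) by (meson lessThan_iff subsetD)
        moreover have "finite (I j)" using Isub[of j] finite_subset by blast
        ultimately show "(norm (W j))^2 = (\<Sum>i\<in>I j. (norm (y i))^2)"
          unfolding W_def by (rule pyth[rotated])
      qed
      also have "\<dots> = real h * (\<Sum>i<k. (norm (y i))^2)"
        unfolding I_def using cyc_sum[OF kpos assms(3)] by blast
      also have "\<dots> = real h" using pyth[of "{..<k}" y] y(1,2) w(1) by simp
      finally show "(\<Sum>j<k. (norm (W j))^2) = real h" .
    qed
    have cs: "(\<Sum>j<k. norm (f j)) \<le> sqrt (real k * real h)"
      if "(\<Sum>j<k. (norm (f j))^2) = real h" for f :: "nat \<Rightarrow> complex^('n \<times> 'm)"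
    proof -
      have "(\<Sum>j<k. \<bar>1\<bar> * \<bar>norm (f j)\<bar>) \<le> L2_set (\<lambda>_. 1) {..<k} * L2_set (\<lambda>j. norm (f j)) {..<k}"
        by (rule L2_set_mult_ineq)
      also have "\<dots> = sqrt (real k) * sqrt (real h)"
        using that by (simp add: L2_set_def)
      finally show ?thesis by (simp add: real_sqrt_mult)
    qed
    have sV: "(\<Sum>j<k. norm (V j)) \<le> sqrt (real k * real h)" using cs sq(1) by blast
    have sW: "(\<Sum>j<k. norm (W j)) \<le> sqrt (real k * real h)" using cs sq(2) by blast
    have inner: "(\<Sum>j<k. braket (y s) X (V j)) = of_nat h * braket (y s) X v" for s
    proof -
      have "(\<Sum>j<k. braket (y s) X (V j)) = (\<Sum>j<k. \<Sum>i\<in>I j. braket (y s) X (u i))"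
        unfolding V_def braket_sum_right ..
      also have "\<dots> = of_nat h * (\<Sum>i<k. braket (y s) X (u i))"
        unfolding I_def by (rule cyc_sum[OF kpos assms(3)])
      also have "\<dots> = of_nat h * braket (y s) X v"
        by (simp add: u(1) braket_sum_right)
      finally show ?thesis .
    qed
    have ident: "(\<Sum>l<k. \<Sum>j<k. braket (W l) X (V j)) = of_nat h * of_nat h * braket w X v"
    proof -
      have "(\<Sum>l<k. \<Sum>j<k. braket (W l) X (V j)) = (\<Sum>l<k. \<Sum>j<k. \<Sum>s\<in>I l. braket (y s) X (V j))"
        unfolding W_def braket_sum_left ..
      also have "\<dots> = (\<Sum>l<k. \<Sum>s\<in>I l. \<Sum>j<k. braket (y s) X (V j))"
        by (intro sum.cong refl sum.swap)
      also have "\<dots> = (\<Sum>l<k. \<Sum>s\<in>I l. of_nat h * braket (y s) X v)"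
        by (simp add: inner)
      also have "\<dots> = of_nat h * (\<Sum>s<k. of_nat h * braket (y s) X v)"
        unfolding I_def by (rule cyc_sum[OF kpos assms(3)])
      also have "\<dots> = of_nat h * of_nat h * braket w X v"
        by (simp add: y(1) braket_sum_left sum_distrib_left mult.assoc)
      finally show ?thesis .
    qed
    have "real h * real h * cmod (braket w X v) = cmod (\<Sum>l<k. \<Sum>j<k. braket (W l) X (V j))"
      unfolding ident by (simp add: norm_mult)
    also have "\<dots> \<le> (\<Sum>l<k. \<Sum>j<k. cmod (braket (W l) X (V j)))"
      by (rule order_trans[OF norm_sum sum_mono[OF norm_sum]])
    also have "\<dots> \<le> (\<Sum>l<k. \<Sum>j<k. N * norm (W l) * norm (V j))"
      unfolding N_def using homog rV rW by (intro sum_mono) blast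
    also have "\<dots> = N * ((\<Sum>l<k. norm (W l)) * (\<Sum>j<k. norm (V j)))"
      by (simp add: sum_product sum_distrib_left mult_ac)
    also have "\<dots> \<le> N * (sqrt (real k * real h) * sqrt (real k * real h))"
      using sV sW N0 by (intro mult_left_mono mult_mono) (auto intro: sum_nonneg)
    also have "\<dots> = N * (real k * real h)" by simp
    finally have "real h * (real h * cmod (braket w X v)) \<le> real h * (N * real k)"
      by (simp add: mult_ac)
    then have "real h * cmod (braket w X v) \<le> N * real k"
      using hpos by simp
    then show ?thesis using hpos by (simp add: field_simps)
  qed
  show "SK_norm k X \<le> (real k / real h) * SK_norm h X"
    unfolding SK_Aset[of k] N_def[symmetric]
  proof (rule cSup_least)
    show "Aset k X \<noteq> {}" by (rule Aset_ne) (use assms in linarith)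
    fix x assume "x \<in> Aset k X"
    then show "x \<le> real k / real h * N" unfolding Aset_def using key by blast
  qed
qed

end
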